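(* Assume the Continuum Hypothesis. Then for every real number $s \in (0,1]$ there exists a Hamel basis $B$ of $\mathbb{R}$ over $\mathbb{Q}$ (that is, a subset $B \subseteq \mathbb{R}$ that is linearly independent over $\mathbb{Q}$ and whose $\mathbb{Q}$-linear span is all of $\mathbb{R}$) such that the Hausdorff dimension of $B$ satisfies $\dim_H(B) = s$.
   Context: The Continuum Hypothesis is the statement $|\mathcal{P}(\mathbb{N})| = |\mathbb{R}| = \aleph_1$, i.e., the continuum has the cardinality of the first uncountable ordinal $\omega_1$. The axiom of choice (ZFC) is assumed. $\dim_H$ denotes the Hausdorff dimension of a subset of $\mathbb{R}$. *)

theory Defs
  imports "HOL-Analysis.Analysis"
begin

text \<open>Continuum Hypothesis: the cardinality of the reals equals aleph_1,
  the cardinal successor of aleph_0 (= natLeq).\<close>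
definition continuum_hypothesis :: bool where
  "continuum_hypothesis \<longleftrightarrow> (card_of (UNIV :: real set), cardSuc natLeq) \<in> ordIso"

definition hausdorff_pre :: "real \<Rightarrow> real \<Rightarrow> real set \<Rightarrow> ennreal" where
  "hausdorff_pre s \<delta> A =
     (INF U \<in> {U :: nat \<Rightarrow> real set. A \<subseteq> (\<Union>i. U i) \<and>
                  (\<forall>i. bounded (U i) \<and> diameter (U i) \<le> \<delta>)}.
        (\<Sum>i. ennreal (diameter (U i) powr s)))"

definition hausdorff_measure :: "real \<Rightarrow> real set \<Rightarrow> ennreal" where
  "hausdorff_measure s A = (SUP \<delta> \<in> {0<..}. hausdorff_pre s \<delta> A)"

definition hausdorff_dim :: "real set \<Rightarrow> real" where
  "hausdorff_dim A = Inf {s. 0 < s \<and> hausdorff_measure s A = 0}"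

definition hamel_basis :: "real set \<Rightarrow> bool" where
  "hamel_basis B \<longleftrightarrow>
     \<not> module.dependent (\<lambda>(q::rat) (x::real). of_rat q * x) B \<and>
     module.span (\<lambda>(q::rat) (x::real). of_rat q * x) B = UNIV"

end

theory Submission
  imports Defs
begin

lemma ch_order:
  assumes "continuum_hypothesis"
  shows "\<exists>R::(real\<times>real) set. wf R \<and> (\<forall>x y. x \<noteq> y \<longrightarrow> (x,y)\<in>R \<or> (y,x)\<in>R)
     \<and> (\<forall>x. countable {y. (y,x)\<in>R})"
proof -
  let ?r = "card_of (UNIV::real set)"
  have WO: "Well_order ?r" by (rule card_of_Well_order)
  have F: "Field ?r = UNIV" by (rule Field_card_of)
  have wf: "wf (?r - Id)" using WO unfolding order_on_defs by blast
  have tot: "\<forall>x y. x \<noteq> y \<longrightarrow> (x,y)\<in>?r - Id \<or> (y,x)\<in>?r - Id"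
    using WO F unfolding order_on_defs total_on_def by auto
  have cnt: "countable {y. (y,x)\<in>?r - Id}" for x
  proof -
    have "(card_of (underS ?r x), ?r) \<in> ordLess" by (rule card_of_underS) (auto simp: F card_of_card_order_on)
    also have "(?r, cardSuc natLeq) \<in> ordIso" using assms unfolding continuum_hypothesis_def by simp
    finally have "(card_of (underS ?r x), cardSuc natLeq) \<in> ordLess" .
    then have "(card_of (underS ?r x), natLeq) \<in> ordLeq"
      using cardSuc_ordLeq_ordLess[OF natLeq_Card_order card_of_Card_order] by blast
    then have "(card_of (underS ?r x), card_of (UNIV::nat set)) \<in> ordLeq"
      using card_of_nat ordLeq_ordIso_trans ordIso_symmetric by blast
    then have "countable (underS ?r x)"
      unfolding countable_def card_of_ordLeq[symmetric] by auto
    moreover have "{y. (y,x)\<in>?r - Id} = underS ?r x" unfolding underS_def by auto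
    ultimately show ?thesis by simp
  qed
  show ?thesis using wf tot cnt by blast
qed

definition cs :: "real \<Rightarrow> (nat \<Rightarrow> bool) \<Rightarrow> real" where
  "cs b d = (\<Sum>i. (if d i then 1 else 0) * (1/b)^Suc i)"

lemma cs_summable:
  fixes b :: real
  assumes "b > 1"
  shows "summable (\<lambda>i. (if d i then 1 else 0) * (1/b)^Suc i)"
proof (rule summable_comparison_test[where g="\<lambda>i. (1/b)^Suc i"])
  show "\<exists>N. \<forall>n\<ge>N. norm ((if d n then 1 else 0) * (1/b)^Suc n) \<le> (1/b)^Suc n"
    using assms by auto
  show "summable (\<lambda>i. (1/b)^Suc i)"
    unfolding power_Suc by (rule summable_mult, rule summable_geometric) (use assms in auto)
qed

lemma geom_sum_b:
  fixes b :: real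
  assumes "b > 1"
  shows "(\<Sum>i. (1/b)^Suc i) = 1/(b-1)"
proof -
  have "(\<Sum>i. (1/b)^Suc i) = (1/b) * (\<Sum>i. (1/b)^i)"
    using assms by (subst suminf_mult[symmetric]) (auto intro: summable_geometric)
  also have "\<dots> = (1/b) * (1/(1 - 1/b))" using assms by (subst suminf_geometric) auto
  also have "\<dots> = 1/(b-1)" using assms by (simp add: field_simps)
  finally show ?thesis .
qed

lemma cs_bounds:
  fixes b :: real
  assumes "b > 1"
  shows "0 \<le> cs b d" "cs b d \<le> 1/(b-1)"
proof -
  show "0 \<le> cs b d" unfolding cs_def using assms
    by (intro suminf_nonneg cs_summable) auto
  have "cs b d \<le> (\<Sum>i. (1/b)^Suc i)" unfolding cs_def using assms
    by (intro suminf_le cs_summable) (auto simp: power_Suc intro!: summable_mult summable_geometric)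
  then show "cs b d \<le> 1/(b-1)" using geom_sum_b[OF assms] by simp
qed

lemma cs_rec:
  fixes b :: real
  assumes "b > 1"
  shows "cs b d = ((if d 0 then 1 else 0) + cs b (\<lambda>i. d (Suc i))) / b"
proof -
  let ?f = "\<lambda>i. (if d i then 1 else 0) * (1/b)^Suc i"
  have s: "summable ?f" by (rule cs_summable[OF assms])
  have "(\<Sum>i. ?f (Suc i)) = cs b d - ?f 0" unfolding cs_def by (rule suminf_split_head[OF s])
  moreover have "(\<Sum>i. ?f (Suc i)) = (1/b) * cs b (\<lambda>i. d (Suc i))"
  proof -
    have e: "(\<lambda>i. ?f (Suc i)) = (\<lambda>i. (1/b) * ((if d (Suc i) then 1 else 0) * (1/b)^Suc i))"
      by (simp add: power_Suc mult_ac)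
    show ?thesis unfolding e cs_def
      by (rule suminf_mult, rule cs_summable[OF assms])
  qed
  ultimately show ?thesis using assms by (simp add: field_simps)
qed

lemma holder_n:
  fixes b s :: real
  assumes b: "b > 2" and s: "s > 0" and bs: "b powr s = 2"
  defines "\<kappa> \<equiv> (b-2)/(b-1)"
  defines "C \<equiv> (b/\<kappa>) powr s"
  shows "\<forall>d d'. (\<forall>i<n. d i = d' i) \<and> d n \<noteq> d' n \<longrightarrow>
     \<bar>cs 2 d - cs 2 d'\<bar> \<le> C * \<bar>cs b d - cs b d'\<bar> powr s \<and> cs b d \<noteq> cs b d'"
proof (induction n)
  case 0
  show ?case
  proof (intro allI impI)
    fix d d' :: "nat \<Rightarrow> bool"
    assume "(\<forall>i<0. d i = d' i) \<and> d 0 \<noteq> d' 0"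
    then have ne: "d 0 \<noteq> d' 0" by simp
    let ?u = "cs b (\<lambda>i. d (Suc i))" and ?u' = "cs b (\<lambda>i. d' (Suc i))"
    have b1: "b > 1" using b by simp
    have u: "0 \<le> ?u" "?u \<le> 1/(b-1)" "0 \<le> ?u'" "?u' \<le> 1/(b-1)" using cs_bounds[OF b1] by auto
    have r1: "cs b d = ((if d 0 then 1 else 0) + ?u)/b" by (rule cs_rec[OF b1])
    have r2: "cs b d' = ((if d' 0 then 1 else 0) + ?u')/b" by (rule cs_rec[OF b1])
    define v where "v = (if d 0 then 1 else (0::real))"
    define v' where "v' = (if d' 0 then 1 else (0::real))"
    have e: "(cs b d - cs b d') * b = (v - v') + (?u - ?u')"
      using r1 r2 b1 unfolding v_def v'_def by (simp add: field_simps)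
    have v1: "\<bar>v - v'\<bar> = 1" using ne unfolding v_def v'_def by auto
    have w: "\<bar>?u - ?u'\<bar> \<le> 1/(b-1)" using u by (simp add: abs_le_iff)
    have "\<bar>(cs b d - cs b d') * b\<bar> \<ge> 1 - 1/(b-1)"
      unfolding e using v1 w by arith
    moreover have "1 - 1/(b-1) = \<kappa>" unfolding \<kappa>_def using b by (simp add: field_simps)
    moreover have "\<bar>(cs b d - cs b d') * b\<bar> = \<bar>cs b d - cs b d'\<bar> * b" using b by (simp add: abs_mult)
    ultimately have "\<bar>cs b d - cs b d'\<bar> * b \<ge> \<kappa>" by simp
    then have L: "\<bar>cs b d - cs b d'\<bar> \<ge> \<kappa>/b" using b by (simp add: field_simps)
    have kpos: "\<kappa> > 0" unfolding \<kappa>_def using b by simp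
    have "C * \<bar>cs b d - cs b d'\<bar> powr s \<ge> C * (\<kappa>/b) powr s"
      unfolding C_def using L kpos b s by (intro mult_left_mono powr_mono2) auto
    also have "C * (\<kappa>/b) powr s = 1" unfolding C_def
      using kpos b by (simp add: powr_mult[symmetric])
    finally have "C * \<bar>cs b d - cs b d'\<bar> powr s \<ge> 1" .
    moreover have "\<bar>cs 2 d - cs 2 d'\<bar> \<le> 1" using cs_bounds[of 2 d] cs_bounds[of 2 d'] by auto
    moreover have "\<kappa>/b > 0" using kpos b by simp
    moreover have "cs b d \<noteq> cs b d'" using L \<open>\<kappa>/b > 0\<close> by auto
    ultimately show "\<bar>cs 2 d - cs 2 d'\<bar> \<le> C * \<bar>cs b d - cs b d'\<bar> powr s \<and> cs b d \<noteq> cs b d'"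
      by linarith
  qed
next
  case (Suc n)
  show ?case
  proof (intro allI impI)
    fix d d' :: "nat \<Rightarrow> bool"
    assume H: "(\<forall>i<Suc n. d i = d' i) \<and> d (Suc n) \<noteq> d' (Suc n)"
    let ?e = "\<lambda>i. d (Suc i)" and ?e' = "\<lambda>i. d' (Suc i)"
    have hyp: "(\<forall>i<n. ?e i = ?e' i) \<and> ?e n \<noteq> ?e' n" using H by auto
    have IHc: "\<bar>cs 2 ?e - cs 2 ?e'\<bar> \<le> C * \<bar>cs b ?e - cs b ?e'\<bar> powr s \<and> cs b ?e \<noteq> cs b ?e'"
      by (rule Suc.IH[rule_format, OF hyp])
    note IH = conjunct1[OF IHc] conjunct2[OF IHc]
    have d0: "d 0 = d' 0" using H by auto
    have b1: "b > 1" using b by simp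
    have r1: "cs b d - cs b d' = (cs b ?e - cs b ?e')/b"
      using cs_rec[OF b1, of d] cs_rec[OF b1, of d'] d0 b1 by (auto simp: field_simps)
    have r2: "cs 2 d - cs 2 d' = (cs 2 ?e - cs 2 ?e')/2"
      using cs_rec[of 2 d] cs_rec[of 2 d'] d0 by (auto simp: field_simps)
    have "\<bar>cs b ?e - cs b ?e'\<bar> powr s = (b * \<bar>cs b d - cs b d'\<bar>) powr s"
      using r1 b by (simp add: abs_mult)
    also have "\<dots> = 2 * \<bar>cs b d - cs b d'\<bar> powr s"
      using b bs by (simp add: powr_mult)
    finally have E: "\<bar>cs b ?e - cs b ?e'\<bar> powr s = 2 * \<bar>cs b d - cs b d'\<bar> powr s" .
    have "\<bar>cs 2 d - cs 2 d'\<bar> = \<bar>cs 2 ?e - cs 2 ?e'\<bar> / 2" unfolding r2 by simp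
    also have "\<dots> \<le> C * \<bar>cs b ?e - cs b ?e'\<bar> powr s / 2" using IH(1) by simp
    also have "\<dots> = C * \<bar>cs b d - cs b d'\<bar> powr s" using E by simp
    finally have le: "\<bar>cs 2 d - cs 2 d'\<bar> \<le> C * \<bar>cs b d - cs b d'\<bar> powr s" .
    have "cs b ?e - cs b ?e' \<noteq> 0" using IH(2) by simp
    then have "cs b d - cs b d' \<noteq> 0" unfolding r1 using b by simp
    then show "\<bar>cs 2 d - cs 2 d'\<bar> \<le> C * \<bar>cs b d - cs b d'\<bar> powr s \<and> cs b d \<noteq> cs b d'"
      using le by simp
  qed
qed

lemma holder:
  fixes b s :: real
  assumes b: "b > 2" and s: "s > 0" and bs: "b powr s = 2"
  shows "\<exists>C>0. \<forall>d d'. \<bar>cs 2 d - cs 2 d'\<bar> \<le> C * \<bar>cs b d - cs b d'\<bar> powr s"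
    and "inj (cs b)"
proof -
  define \<kappa> where "\<kappa> = (b-2)/(b-1)"
  define C where "C = (b/\<kappa>) powr s"
  have kpos: "\<kappa> > 0" unfolding \<kappa>_def using b by simp
  have Cpos: "C > 0" unfolding C_def using kpos b by simp
  have main: "\<bar>cs 2 d - cs 2 d'\<bar> \<le> C * \<bar>cs b d - cs b d'\<bar> powr s \<and> (d \<noteq> d' \<longrightarrow> cs b d \<noteq> cs b d')" for d d'
  proof (cases "d = d'")
    case True then show ?thesis by simp
  next
    case False
    then obtain i where "d i \<noteq> d' i" by auto
    define n where "n = (LEAST i. d i \<noteq> d' i)"
    have "d n \<noteq> d' n" unfolding n_def by (rule LeastI) fact
    moreover have "\<forall>j<n. d j = d' j" unfolding n_def using not_less_Least by blast
    ultimately show ?thesis using holder_n[OF b s bs, of n] unfolding C_def \<kappa>_def by blast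
  qed
  show "\<exists>C>0. \<forall>d d'. \<bar>cs 2 d - cs 2 d'\<bar> \<le> C * \<bar>cs b d - cs b d'\<bar> powr s"
    using main Cpos by blast
  show "inj (cs b)" using main by (auto intro: injI)
qed

definition fcov :: "real \<Rightarrow> real \<Rightarrow> real set \<Rightarrow> real \<Rightarrow> bool" where
  "fcov t \<delta> A S \<longleftrightarrow> (\<exists>(N::nat) (U::nat \<Rightarrow> real set). (\<forall>k. bounded (U k) \<and> diameter (U k) \<le> \<delta>) \<and>
      A \<subseteq> (\<Union>k<N. U k) \<and> (\<Sum>k<N. diameter (U k) powr t) \<le> S)"

lemma sum_split_add: "(\<Sum>k<N1+N2. f k) = (\<Sum>k<N1. f k) + (\<Sum>k<N2. f (N1+k))"
  for f :: "nat \<Rightarrow> real"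
  by (induction N2) simp_all

lemma fcov_mono: "fcov t \<delta> A S \<Longrightarrow> B \<subseteq> A \<Longrightarrow> \<delta> \<le> \<delta>' \<Longrightarrow> S \<le> S' \<Longrightarrow> fcov t \<delta>' B S'"
  unfolding fcov_def by (meson order_trans subset_trans)

lemma fcov_Un:
  assumes "fcov t \<delta> A S1" "fcov t \<delta> B S2"
  shows "fcov t \<delta> (A \<union> B) (S1 + S2)"
proof -
  obtain N1 :: nat and U1 where 1: "\<forall>k. bounded (U1 k) \<and> diameter (U1 k) \<le> \<delta>" "A \<subseteq> (\<Union>k<N1. U1 k)"
    "(\<Sum>k<N1. diameter (U1 k) powr t) \<le> S1" using assms(1) unfolding fcov_def by blast
  obtain N2 :: nat and U2 where 2: "\<forall>k. bounded (U2 k) \<and> diameter (U2 k) \<le> \<delta>" "B \<subseteq> (\<Union>k<N2. U2 k)"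
    "(\<Sum>k<N2. diameter (U2 k) powr t) \<le> S2" using assms(2) unfolding fcov_def by blast
  define U where "U k = (if k < N1 then U1 k else U2 (k - N1))" for k
  have "\<forall>k. bounded (U k) \<and> diameter (U k) \<le> \<delta>" unfolding U_def using 1 2 by auto
  moreover have "A \<union> B \<subseteq> (\<Union>k<N1+N2. U k)"
  proof
    fix x assume "x \<in> A \<union> B"
    then show "x \<in> (\<Union>k<N1+N2. U k)"
    proof
      assume "x \<in> A" then obtain k where "k < N1" "x \<in> U1 k" using 1 by auto
      then show ?thesis unfolding U_def by (intro UN_I[of k]) auto
    next
      assume "x \<in> B" then obtain k where "k < N2" "x \<in> U2 k" using 2 by auto
      then show ?thesis unfolding U_def by (intro UN_I[of "N1 + k"]) auto
    qed
  qed
  moreover have "(\<Sum>k<N1+N2. diameter (U k) powr t) \<le> S1 + S2"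
    unfolding sum_split_add using 1 2 by (simp add: U_def)
  ultimately show ?thesis unfolding fcov_def by blast
qed

lemma fcov_image:
  fixes b a t :: real
  assumes b: "b \<ge> 1" and t: "t > 0" and "fcov t \<delta> A S"
  shows "fcov t (\<delta>/b) ((\<lambda>x. (x+a)/b) ` A) (S / b powr t)"
proof -
  obtain N :: nat and U where 1: "\<forall>k. bounded (U k) \<and> diameter (U k) \<le> \<delta>" "A \<subseteq> (\<Union>k<N. U k)"
    "(\<Sum>k<N. diameter (U k) powr t) \<le> S" using assms(3) unfolding fcov_def by blast
  let ?f = "\<lambda>x::real. (x+a)/b"
  define V where "V k = ?f ` U k" for k
  have dV: "diameter (V k) \<le> diameter (U k) / b" for k
  proof (cases "U k = {}")
    case True then show ?thesis by (simp add: V_def)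
  next
    case False
    show ?thesis unfolding V_def
    proof (rule diameter_le)
      show "?f ` U k \<noteq> {} \<or> 0 \<le> diameter (U k) / b" using False by auto
      fix x y assume "x \<in> ?f ` U k" "y \<in> ?f ` U k"
      then obtain x' y' where xy: "x' \<in> U k" "y' \<in> U k" "x = ?f x'" "y = ?f y'" by auto
      have "dist x' y' \<le> diameter (U k)" using 1(1) xy by (intro diameter_bounded_bound) auto
      then have "\<bar>x' - y'\<bar> \<le> diameter (U k)" by (simp add: dist_real_def)
      moreover have "x - y = (x' - y')/b" using xy b by (simp add: field_simps)
      ultimately show "norm (x - y) \<le> diameter (U k) / b" using b
        by (simp add: abs_div divide_right_mono)
    qed
  qed
  have bV: "bounded (V k)" for k
  proof -
    obtain B where B: "\<forall>x\<in>U k. \<bar>x\<bar> \<le> B" using 1(1) unfolding bounded_iff by auto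
    have "\<forall>y\<in>V k. \<bar>y\<bar> \<le> (B + \<bar>a\<bar>)/b"
    proof
      fix y assume "y \<in> V k"
      then obtain x where x: "x \<in> U k" "y = (x+a)/b" unfolding V_def by auto
      have "\<bar>x + a\<bar> \<le> B + \<bar>a\<bar>" using B x(1) by (smt (verit) abs_triangle_ineq)
      then show "\<bar>y\<bar> \<le> (B + \<bar>a\<bar>)/b" using x(2) b by (simp add: abs_div divide_right_mono)
    qed
    then show ?thesis unfolding bounded_iff by auto
  qed
  have "\<forall>k. bounded (V k) \<and> diameter (V k) \<le> \<delta>/b"
    using dV bV 1(1) b by (meson divide_right_mono order_trans zero_le_one less_le_trans le_less)
  moreover have "?f ` A \<subseteq> (\<Union>k<N. V k)" using 1(2) unfolding V_def by blast
  moreover have "(\<Sum>k<N. diameter (V k) powr t) \<le> S / b powr t"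
  proof -
    have "(\<Sum>k<N. diameter (V k) powr t) \<le> (\<Sum>k<N. (diameter (U k) / b) powr t)"
      using dV bV t by (intro sum_mono powr_mono2) (auto intro: diameter_ge_0)
    also have "\<dots> = (\<Sum>k<N. diameter (U k) powr t) / b powr t"
      using 1(1) b by (simp add: powr_divide diameter_ge_0 sum_divide_distrib)
    also have "\<dots> \<le> S / b powr t" using 1(3) by (simp add: divide_right_mono)
    finally show ?thesis .
  qed
  ultimately show ?thesis unfolding fcov_def by blast
qed

lemma fcov_pre:
  assumes "\<delta> \<ge> 0" "fcov t \<delta> A S"
  shows "hausdorff_pre t \<delta> A \<le> ennreal S"
proof -
  obtain N :: nat and U where 1: "\<forall>k. bounded (U k) \<and> diameter (U k) \<le> \<delta>" "A \<subseteq> (\<Union>k<N. U k)"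
    "(\<Sum>k<N. diameter (U k) powr t) \<le> S" using assms(2) unfolding fcov_def by blast
  define U' where "U' k = (if k < N then U k else {})" for k
  have mem: "U' \<in> {U :: nat \<Rightarrow> real set. A \<subseteq> (\<Union>i. U i) \<and> (\<forall>i. bounded (U i) \<and> diameter (U i) \<le> \<delta>)}"
    using 1 assms(1) unfolding U'_def by (auto split: if_splits)
  have "hausdorff_pre t \<delta> A \<le> (\<Sum>i. ennreal (diameter (U' i) powr t))"
    unfolding hausdorff_pre_def by (rule INF_lower[OF mem])
  also have "(\<Sum>i. ennreal (diameter (U' i) powr t)) = (\<Sum>i<N. ennreal (diameter (U' i) powr t))"
    by (rule suminf_finite) (auto simp: U'_def)
  also have "\<dots> = ennreal (\<Sum>i<N. diameter (U i) powr t)"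
    by (subst sum_ennreal) (auto simp: U'_def)
  also have "\<dots> \<le> ennreal S" using 1(3) by (rule ennreal_leI)
  finally show ?thesis .
qed

lemma cantor_fcov:
  fixes b t :: real
  assumes b: "b > 1" and t: "t > 0"
  shows "fcov t ((1/(b-1))*(1/b)^n) (range (cs b)) ((1/(b-1)) powr t * (2/b powr t)^n)"
proof (induction n)
  case 0
  let ?D = "1/(b-1)"
  define U where "U k = {0..?D}" for k :: nat
  have "diameter {0..?D} \<le> ?D"
    by (rule diameter_le) (use b in \<open>auto simp: dist_real_def\<close>)
  moreover have "bounded {0..?D}" by simp
  moreover have "range (cs b) \<subseteq> (\<Union>k<1. U k)" using cs_bounds[OF b] unfolding U_def by auto
  moreover have "(\<Sum>k<1. diameter (U k) powr t) \<le> ?D powr t"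
    using calculation t unfolding U_def by (simp add: powr_mono2 diameter_ge_0)
  ultimately show ?case unfolding fcov_def U_def by (intro exI[of _ 1] exI[of _ U]) (auto simp: U_def)
next
  case (Suc n)
  let ?Y = "range (cs b)"
  have sub: "?Y \<subseteq> (\<lambda>x. (x+0)/b) ` ?Y \<union> (\<lambda>x. (x+1)/b) ` ?Y"
  proof
    fix y assume "y \<in> ?Y"
    then obtain d where y: "y = cs b d" by auto
    have "y = ((if d 0 then 1 else 0) + cs b (\<lambda>i. d (Suc i)))/b" unfolding y by (rule cs_rec[OF b])
    then show "y \<in> (\<lambda>x. (x+0)/b) ` ?Y \<union> (\<lambda>x. (x+1)/b) ` ?Y" by (cases "d 0") auto
  qed
  have b1: "b \<ge> 1" using b by simp
  define K where "K = (1/(b-1)) powr t * (2/b powr t)^n"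
  have fc: "fcov t ((1/(b-1))*(1/b)^n / b) (((\<lambda>x. (x+0)/b) ` ?Y) \<union> ((\<lambda>x. (x+1)/b) ` ?Y))
     (K / b powr t + K / b powr t)"
    unfolding K_def by (intro fcov_Un fcov_image[OF b1 t] Suc.IH)
  have e1: "(1/(b-1))*(1/b)^n / b = (1/(b-1))*(1/b)^Suc n" by simp
  have g: "K / y + K / y = K * (2 / y)" for y :: real by simp
  have e2: "K / b powr t + K / b powr t = (1/(b-1)) powr t * (2/b powr t)^Suc n"
  proof -
    have "K * (2 / b powr t) = (1/(b-1)) powr t * (2/b powr t)^Suc n"
      unfolding K_def by (simp only: power_Suc mult_ac)
    then show ?thesis using g[of "b powr t"] by simp
  qed
  show ?case using fcov_mono[OF fc sub] e1 e2 by simp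
qed

lemma cantor_null:
  fixes b t :: real
  assumes b: "b > 1" and t: "t > 0" and bt: "b powr t > 2" and d: "\<delta> > 0" and e: "\<epsilon> > 0"
  shows "fcov t \<delta> (range (cs b)) \<epsilon>"
proof -
  let ?D = "1/(b-1)"
  have Dp: "?D > 0" using b by simp
  have "eventually (\<lambda>n. (1/b)^n < \<delta>/?D) sequentially"
    using b d Dp by (intro order_tendstoD(2)[OF LIMSEQ_power_zero]) auto
  moreover have "eventually (\<lambda>n. (2/b powr t)^n < \<epsilon>/(?D powr t)) sequentially"
    using bt e Dp by (intro order_tendstoD(2)[OF LIMSEQ_power_zero]) auto
  ultimately have "eventually (\<lambda>n. (1/b)^n < \<delta>/?D \<and> (2/b powr t)^n < \<epsilon>/(?D powr t)) sequentially"
    by (rule eventually_conj)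
  then obtain N where "\<forall>n\<ge>N. (1/b)^n < \<delta>/?D \<and> (2/b powr t)^n < \<epsilon>/(?D powr t)"
    unfolding eventually_sequentially by blast
  then obtain n where n: "(1/b)^n < \<delta>/?D" "(2/b powr t)^n < \<epsilon>/(?D powr t)" by blast
  have "?D * (1/b)^n \<le> \<delta>" using n(1) Dp by (simp add: field_simps)
  moreover have "?D powr t * (2/b powr t)^n \<le> \<epsilon>" using n(2) Dp by (simp add: field_simps)
  ultimately show ?thesis using cantor_fcov[OF b t, of n] fcov_mono by blast
qed

interpretation Q: vector_space "\<lambda>(q::rat) (x::real). of_rat q * x"
  by unfold_locales (simp_all add: algebra_simps of_rat_add of_rat_mult)

lemma digits_exist:
  fixes m :: nat and x :: real
  assumes m: "m \<ge> 2" and x: "0 \<le> x" "x < 1"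
  shows "\<exists>e. (\<forall>i. e i < m) \<and> (\<lambda>i. real (e i) * (1/real m)^Suc i) sums x"
proof -
  define F where "F n = \<lfloor>x * real m ^ n\<rfloor>" for n
  define e where "e i = nat (F (Suc i) mod int m)" for i
  have mpos: "real m > 0" using m by simp
  have e_lt: "e i < m" for i unfolding e_def using m by (simp add: nat_less_iff)
  have e_real: "real (e i) = real_of_int (F (Suc i) mod int m)" for i
    unfolding e_def using m by simp
  have Fdiv: "F (Suc n) div int m = F n" for n
  proof -
    have "F (Suc n) div int m = \<lfloor>x * real m ^ Suc n / real_of_int (int m)\<rfloor>"
      unfolding F_def by (rule floor_divide_real_eq_div[symmetric]) simp
    also have "x * real m ^ Suc n / real_of_int (int m) = x * real m ^ n" using mpos by simp
    finally show ?thesis unfolding F_def .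
  qed
  have Fsuc: "real_of_int (F (Suc n)) = real m * real_of_int (F n) + real (e n)" for n
  proof -
    have "F (Suc n) = int m * (F (Suc n) div int m) + F (Suc n) mod int m" by simp
    then have "F (Suc n) = int m * F n + F (Suc n) mod int m" using Fdiv by simp
    then show ?thesis unfolding e_real by (metis of_int_add of_int_mult of_int_of_nat_eq)
  qed
  have F0: "F 0 = 0" unfolding F_def using x by (simp add: floor_eq_iff)
  have part: "(\<Sum>i<n. real (e i) * (1/real m)^Suc i) = real_of_int (F n) / real m ^ n" for n
  proof (induction n)
    case 0 then show ?case using F0 by simp
  next
    case (Suc n)
    have "(\<Sum>i<Suc n. real (e i) * (1/real m)^Suc i)
        = real_of_int (F n) / real m ^ n + real (e n) / real m ^ Suc n"
      using Suc by (simp add: power_divide)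
    also have "\<dots> = (real m * real_of_int (F n) + real (e n)) / real m ^ Suc n"
      using mpos by (simp add: field_simps)
    also have "\<dots> = real_of_int (F (Suc n)) / real m ^ Suc n" using Fsuc by simp
    finally show ?case .
  qed
  have lo: "x - (1/real m)^n \<le> real_of_int (F n) / real m ^ n" for n
  proof -
    have "x * real m ^ n - 1 \<le> real_of_int (F n)" unfolding F_def by linarith
    then have "(x * real m ^ n - 1) / real m ^ n \<le> real_of_int (F n) / real m ^ n"
      using mpos by (intro divide_right_mono) auto
    then show ?thesis using mpos by (simp add: field_simps power_divide)
  qed
  have hi: "real_of_int (F n) / real m ^ n \<le> x" for n
  proof -
    have "real_of_int (F n) \<le> x * real m ^ n" unfolding F_def by linarith
    then show ?thesis using mpos by (simp add: field_simps)
  qed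
  have "(\<lambda>n. x - (1/real m)^n) \<longlonglongrightarrow> x - 0"
    using m by (intro tendsto_diff tendsto_const LIMSEQ_power_zero) auto
  then have lim: "(\<lambda>n. x - (1/real m)^n) \<longlonglongrightarrow> x" by simp
  have ev1: "eventually (\<lambda>n. x - (1/real m)^n \<le> real_of_int (F n) / real m ^ n) sequentially"
    using lo by (intro always_eventually) blast
  have ev2: "eventually (\<lambda>n. real_of_int (F n) / real m ^ n \<le> x) sequentially"
    using hi by (intro always_eventually) blast
  have "(\<lambda>n. real_of_int (F n) / real m ^ n) \<longlonglongrightarrow> x"
    by (rule tendsto_sandwich[OF ev1 ev2 lim tendsto_const])
  then have "(\<lambda>i. real (e i) * (1/real m)^Suc i) sums x"
    unfolding sums_def part .
  then show ?thesis using e_lt by blast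
qed

lemma binary_surj:
  assumes "0 \<le> x" "x < 1"
  shows "\<exists>d. cs 2 d = x"
proof -
  obtain e :: "nat \<Rightarrow> nat" where e: "\<forall>i. e i < 2" "(\<lambda>i. real (e i) * (1/real 2)^Suc i) sums x"
    using digits_exist[of 2 x] assms by auto
  define d where "d i = (e i = 1)" for i
  have "real (e i) = (if d i then 1 else 0)" for i
  proof -
    have "e i = 0 \<or> e i = 1" using e(1)[rule_format, of i] by arith
    then show ?thesis unfolding d_def by auto
  qed
  then have "(\<lambda>i. (if d i then 1 else 0) * (1/2::real)^Suc i) sums x" using e(2) by simp
  then have "cs 2 d = x" unfolding cs_def by (rule sums_unique[symmetric])
  then show ?thesis by blast
qed

lemma sum_ind_min: "(\<Sum>j\<in>{1..M}. if j \<le> k then (1::real) else 0) = real (min k M)"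
  by (induction M) (auto simp: min_def)

lemma span_cs:
  fixes m :: nat
  assumes m: "m \<ge> 2"
  shows "Q.span (range (cs (real m))) = UNIV"
proof -
  have m1: "real m > 1" using m by simp
  have unit: "x \<in> Q.span (range (cs (real m)))" if x: "0 \<le> x" "x < 1" for x
  proof -
    obtain e where e: "\<forall>i. e i < m" "(\<lambda>i. real (e i) * (1/real m)^Suc i) sums x"
      using digits_exist[OF m x] by blast
    have ee: "real (e i) = (\<Sum>j\<in>{1..m-1}. if j \<le> e i then 1 else 0)" for i
    proof -
      have "e i \<le> m - 1" using e(1)[rule_format, of i] by arith
      then show ?thesis by (subst sum_ind_min) (simp add: min_absorb1)
    qed
    have "x = (\<Sum>i. real (e i) * (1/real m)^Suc i)" using e(2) by (simp add: sums_iff)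
    also have "\<dots> = (\<Sum>i. \<Sum>j\<in>{1..m-1}. (if j \<le> e i then 1 else 0) * (1/real m)^Suc i)"
      unfolding ee sum_distrib_right by (rule refl)
    also have "\<dots> = (\<Sum>j\<in>{1..m-1}. \<Sum>i. (if j \<le> e i then 1 else 0) * (1/real m)^Suc i)"
      by (rule suminf_sum) (use cs_summable[OF m1] in auto)
    also have "\<dots> = (\<Sum>j\<in>{1..m-1}. cs (real m) (\<lambda>i. j \<le> e i))"
      unfolding cs_def by simp
    finally have "x = (\<Sum>j\<in>{1..m-1}. cs (real m) (\<lambda>i. j \<le> e i))" .
    moreover have "(\<Sum>j\<in>{1..m-1}. cs (real m) (\<lambda>i. j \<le> e i)) \<in> Q.span (range (cs (real m)))"
      by (intro Q.span_sum Q.span_base) auto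
    ultimately show ?thesis by simp
  qed
  have "r \<in> Q.span (range (cs (real m)))" for r
  proof -
    define N where "N = nat \<lceil>\<bar>r\<bar>\<rceil> + 1"
    have c0: "(0::int) \<le> \<lceil>\<bar>r\<bar>\<rceil>" by simp
    have RN: "real N = real_of_int \<lceil>\<bar>r\<bar>\<rceil> + 1" unfolding N_def using c0 by simp
    have Npos: "real N > 0" using RN c0 by linarith
    have lt: "\<bar>r\<bar> < real N" using RN le_of_int_ceiling[of "\<bar>r\<bar>"] by linarith
    have lt1: "\<bar>r\<bar> / real N < 1" using lt Npos by simp
    have ge0: "0 \<le> \<bar>r\<bar> / real N" using Npos by simp
    have u: "\<bar>r\<bar> / real N \<in> Q.span (range (cs (real m)))" by (rule unit[OF ge0 lt1])
    define q where "q = (if r \<ge> 0 then of_nat N else - of_nat N :: rat)"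
    have A: "of_rat q * (\<bar>r\<bar> / real N) \<in> Q.span (range (cs (real m)))"
      by (rule Q.span_scale[OF u])
    have e1: "of_rat q * (\<bar>r\<bar> / real N) = (if r \<ge> 0 then real N else - real N) * (\<bar>r\<bar> / real N)"
      unfolding q_def by (simp add: of_rat_minus)
    have e2: "(if r \<ge> 0 then real N else - real N) * (\<bar>r\<bar> / real N) = r"
      using Npos by (cases "r \<ge> 0") simp_all
    show ?thesis using A unfolding e1 e2 .
  qed
  then show ?thesis by auto
qed

definition lsum :: "(rat \<times> real) list \<Rightarrow> real" where
  "lsum xs = sum_list (map (\<lambda>(q,v). of_rat q * v) xs)"

lemma lsum_append: "lsum (xs @ ys) = lsum xs + lsum ys"
  unfolding lsum_def by simp

lemma lsum_scale: "lsum (map (\<lambda>(q,v). (c*q, v)) xs) = of_rat c * lsum xs"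
  unfolding lsum_def by (induction xs) (auto simp: of_rat_mult algebra_simps)

lemma span_countable:
  assumes "countable S"
  shows "countable (Q.span S)"
proof -
  define T where "T = lsum ` lists (UNIV \<times> S)"
  have "countable (UNIV \<times> S :: (rat \<times> real) set)" using assms by auto
  then have cT: "countable T" unfolding T_def by auto
  have "Q.subspace T"
  proof (rule Q.subspaceI)
    show "0 \<in> T" unfolding T_def by (rule image_eqI[of _ _ "[]"]) (auto simp: lsum_def)
    fix x y assume "x \<in> T" "y \<in> T"
    then obtain xs ys where "xs \<in> lists (UNIV \<times> S)" "ys \<in> lists (UNIV \<times> S)" "x = lsum xs" "y = lsum ys"
      unfolding T_def by auto
    then show "x + y \<in> T" unfolding T_def
      by (intro image_eqI[of _ _ "xs @ ys"]) (auto simp: lsum_append)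
  next
    fix c x assume "x \<in> T"
    then obtain xs where xs: "xs \<in> lists (UNIV \<times> S)" "x = lsum xs" unfolding T_def by auto
    then show "of_rat c * x \<in> T" unfolding T_def
      by (intro image_eqI[of _ _ "map (\<lambda>(q,v). (c*q, v)) xs"]) (auto simp: lsum_scale)
  qed
  moreover have "S \<subseteq> T"
  proof
    fix v assume "v \<in> S"
    then show "v \<in> T" unfolding T_def
      by (intro image_eqI[of _ _ "[(1,v)]"]) (auto simp: lsum_def)
  qed
  ultimately have "Q.span S \<subseteq> T" by (intro Q.span_minimal)
  then show ?thesis using cT countable_subset by blast
qed

lemma fin_max:
  assumes "wf R" "finite A" "A \<noteq> {}"
  shows "\<exists>m\<in>A. \<forall>j\<in>A. (m,j) \<notin> R"
proof -
  let ?r = "R \<inter> (A \<times> A)"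
  have f: "finite ?r" by (rule finite_subset[OF Int_lower2 finite_cartesian_product[OF assms(2) assms(2)]])
  have a: "acyclic ?r" by (rule acyclic_subset[OF wf_acyclic[OF assms(1)] Int_lower1])
  have w: "wf (?r\<inverse>)" by (rule finite_acyclic_wf_converse[OF f a])
  obtain x where x: "x \<in> A" using assms(3) by auto
  obtain z where z: "z \<in> A" "\<And>y. (y, z) \<in> ?r\<inverse> \<Longrightarrow> y \<notin> A"
    by (rule wfE_min[OF w x]) blast
  have "\<forall>j\<in>A. (z,j) \<notin> R"
  proof
    fix j assume j: "j \<in> A"
    show "(z,j) \<notin> R"
    proof
      assume "(z,j) \<in> R"
      then have "(j, z) \<in> ?r\<inverse>" using j z(1) by simp
      then show False using z(2) j by blast
    qed
  qed
  then show ?thesis using z(1) by blast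
qed

lemma indep_order:
  fixes y :: "'i \<Rightarrow> real" and R :: "('i \<times> 'i) set"
  assumes wf: "wf R" and tot: "\<forall>i j. i \<noteq> j \<longrightarrow> (i,j) \<in> R \<or> (j,i) \<in> R"
    and notin: "\<forall>i. y i \<notin> Q.span (y ` {j. (j,i) \<in> R})"
  shows "\<not> Q.dependent (range y)"
proof
  assume "Q.dependent (range y)"
  then obtain t u where t: "finite t" "t \<subseteq> range y" "(\<Sum>v\<in>t. of_rat (u v) * v) = 0"
    and v0: "\<exists>v\<in>t. u v \<noteq> 0"
    unfolding Q.dependent_explicit by blast
  define S where "S = {v\<in>t. u v \<noteq> 0}"
  define idx where "idx v = (SOME i. y i = v)" for v
  have yidx: "y (idx v) = v" if vt: "v \<in> t" for v
    proof -
    obtain i where "y i = v" using vt t(2) by blast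
    then show ?thesis unfolding idx_def by (rule someI)
  qed
  have fin: "finite (idx ` S)" "idx ` S \<noteq> {}" using t(1) v0 unfolding S_def by auto
  obtain m where m: "m \<in> idx ` S" "\<forall>j\<in>idx ` S. (m,j) \<notin> R"
    using fin_max[OF wf fin] by blast
  obtain w where w: "w \<in> S" "m = idx w" using m(1) by auto
  have wt: "w \<in> t" "u w \<noteq> 0" using w(1) unfolding S_def by auto
  have ym: "y m = w" using yidx[OF wt(1)] w(2) by simp
  let ?P = "Q.span (y ` {j. (j,m) \<in> R})"
  have terms: "of_rat (u v) * v \<in> ?P" if "v \<in> t - {w}" for v
  proof (cases "u v = 0")
    case True then show ?thesis using Q.span_zero by simp
  next
    case False
    then have vS: "v \<in> S" using that unfolding S_def by auto
    have "idx v \<noteq> m" using yidx[of v] that ym by auto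
    then have "(idx v, m) \<in> R" using tot m(2) vS by blast
    then have "v \<in> y ` {j. (j,m) \<in> R}" using yidx[of v] that by force
    then show ?thesis by (intro Q.span_scale Q.span_base)
  qed
  have "(\<Sum>v\<in>t. of_rat (u v) * v) = of_rat (u w) * w + (\<Sum>v\<in>t - {w}. of_rat (u v) * v)"
    using t(1) wt(1) by (simp add: sum.remove)
  then have eq: "of_rat (u w) * w = - (\<Sum>v\<in>t - {w}. of_rat (u v) * v)" using t(3) by simp
  have "(\<Sum>v\<in>t - {w}. of_rat (u v) * v) \<in> ?P" by (rule Q.span_sum) (rule terms)
  then have "of_rat (u w) * w \<in> ?P" unfolding eq by (rule Q.span_neg)
  then have A: "of_rat (inverse (u w)) * (of_rat (u w) * w) \<in> ?P" by (rule Q.span_scale)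
  have e: "of_rat (inverse (u w)) * (of_rat (u w) * w) = w"
    using wt(2) by (simp add: of_rat_inverse[symmetric] of_rat_mult[symmetric] mult.assoc[symmetric])
  have "w \<in> ?P" using A unfolding e .
  then show False using notin ym by auto
qed

definition cover_set :: "(nat \<Rightarrow> rat \<times> rat) \<Rightarrow> real set" where
  "cover_set c = (\<Union>n. {real_of_rat (fst (c n)) <..< real_of_rat (snd (c n))})"

definition small :: "(nat \<Rightarrow> rat \<times> rat) \<Rightarrow> bool" where
  "small c \<longleftrightarrow> (\<Sum>n. ennreal (real_of_rat (snd (c n)) - real_of_rat (fst (c n)))) < 1"

lemma avoid:
  assumes "small c" "countable K"
  shows "\<exists>x. 0 \<le> x \<and> x < 1 \<and> x \<notin> cover_set c \<and> x \<notin> K"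
proof (rule ccontr)
  assume "\<not> ?thesis"
  then have sub: "{0..<1} - cover_set c \<subseteq> K" by auto
  have cnt: "countable ({0..<1} - cover_set c)" by (rule countable_subset[OF sub assms(2)])
  have m0: "emeasure lborel ({0..<1::real} - cover_set c) = 0"
    by (rule emeasure_lborel_countable[OF cnt])
  have ms: "cover_set c \<in> sets lborel" unfolding cover_set_def by auto
  have "emeasure lborel (cover_set c) \<le> (\<Sum>n. emeasure lborel {real_of_rat (fst (c n)) <..< real_of_rat (snd (c n))})"
    unfolding cover_set_def by (rule emeasure_subadditive_countably) auto
  also have "\<dots> \<le> (\<Sum>n. ennreal (real_of_rat (snd (c n)) - real_of_rat (fst (c n))))"
  proof (rule suminf_le)
    fix n
    show "emeasure lborel {real_of_rat (fst (c n)) <..< real_of_rat (snd (c n))}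
      \<le> ennreal (real_of_rat (snd (c n)) - real_of_rat (fst (c n)))"
      by (cases "real_of_rat (fst (c n)) \<le> real_of_rat (snd (c n))") auto
  qed auto
  also have "\<dots> < 1" using assms(1) unfolding small_def .
  finally have lt: "emeasure lborel (cover_set c) < 1" .
  have "{0..<1::real} \<subseteq> cover_set c \<union> ({0..<1} - cover_set c)" by auto
  then have "emeasure lborel {0..<1::real} \<le> emeasure lborel (cover_set c \<union> ({0..<1} - cover_set c))"
    by (intro emeasure_mono) (use ms in auto)
  also have "\<dots> \<le> emeasure lborel (cover_set c) + emeasure lborel ({0..<1} - cover_set c)"
    by (rule emeasure_subadditive) (use ms in auto)
  also have "\<dots> < 1" using lt m0 by simp
  finally show False by simp
qed

lemma enc_exists: "\<exists>enc :: (nat \<Rightarrow> rat \<times> rat) \<Rightarrow> real. inj enc"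
proof -
  define g where "g f = (\<lambda>k. case prod_decode k of (i, j) \<Rightarrow> to_nat (f i :: rat \<times> rat) = j)" for f :: "nat \<Rightarrow> rat \<times> rat"
  have ig: "inj g"
  proof (rule injI)
    fix f1 f2 assume e: "g f1 = g f2"
    show "f1 = f2"
    proof
      fix i
      have "g f1 (prod_encode (i, to_nat (f1 i))) = g f2 (prod_encode (i, to_nat (f1 i)))" using e by simp
      then have "to_nat (f2 i) = to_nat (f1 i)" unfolding g_def by simp
      then show "f1 i = f2 i" by simp
    qed
  qed
  have s: "(0::real) < log 3 2" by simp
  have "(3::real) powr (log 3 2) = 2" by simp
  then have "inj (cs 3)" using holder(2)[of 3 "log 3 2"] s by simp
  then have "inj (cs 3 \<circ> g)" using ig by (rule inj_compose)
  then show ?thesis by blast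
qed

lemma geo_quarter: "(\<Sum>i. ennreal ((1/2)^i / 4)) = ennreal (1/2)"
proof -
  have sm: "summable (\<lambda>i. (1/2::real)^i / 4)" by (intro summable_divide summable_geometric) simp
  have "(\<Sum>i. (1/2::real)^i / 4) = (\<Sum>i. (1/2::real)^i) / 4" by (rule suminf_divide) (rule summable_geometric, simp)
  also have "\<dots> = 1/2" by (subst suminf_geometric) simp_all
  finally have e1: "(\<Sum>i. (1/2::real)^i / 4) = 1/2" .
  have e2: "(\<Sum>i. ennreal ((1/2)^i / 4)) = ennreal (\<Sum>i. (1/2::real)^i / 4)"
    by (rule suminf_ennreal2) (use sm in auto)
  show ?thesis by (simp only: e2 e1)
qed

lemma construct:
  fixes \<phi> \<psi> :: "(nat \<Rightarrow> bool) \<Rightarrow> real" and W :: "real set" and C s :: real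
  assumes CH: "continuum_hypothesis"
    and hol: "\<And>d d'. \<bar>\<psi> d - \<psi> d'\<bar> \<le> C * \<bar>\<phi> d - \<phi> d'\<bar> powr s" and C: "C > 0" and s: "s > 0"
    and surj: "\<And>x. 0 \<le> x \<Longrightarrow> x < 1 \<Longrightarrow> \<exists>d. \<psi> d = x"
    and W: "range \<phi> \<subseteq> W" "Q.span W = UNIV"
  shows "\<exists>B. hamel_basis B \<and> B \<subseteq> W \<and>
     (\<forall>U. B \<subseteq> (\<Union>i. U i) \<and> (\<forall>i. bounded (U i)) \<longrightarrow>
         ennreal (1/(8*C)) \<le> (\<Sum>i. ennreal (diameter (U i) powr s)))"
proof -
  obtain R :: "(real \<times> real) set" where R: "wf R" "\<forall>x y. x \<noteq> y \<longrightarrow> (x,y)\<in>R \<or> (y,x)\<in>R"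
    "\<forall>x. countable {y. (y,x)\<in>R}" using ch_order[OF CH] by blast
  obtain enc :: "(nat \<Rightarrow> rat \<times> rat) \<Rightarrow> real" where enc: "inj enc" using enc_exists by blast
  define cov where "cov i = inv enc i" for i
  have cov_enc: "cov (enc c) = c" for c unfolding cov_def using enc by simp
  define good where "good i S d \<longleftrightarrow> (small (cov i) \<longrightarrow> \<psi> d \<notin> cover_set (cov i)) \<and> \<phi> d \<notin> Q.span S"
    for i S d
  have samepsi: "\<psi> d = \<psi> d'" if "\<phi> d = \<phi> d'" for d d'
    using hol[of d d'] that s by simp
  have ex: "\<exists>d. good i S d" if cS: "countable S" for i S
  proof -
    define G where "G z = \<psi> (SOME d. \<phi> d = z)" for z
    define K where "K = G ` Q.span S"
    have cK: "countable K" unfolding K_def using span_countable[OF cS] by simp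
    define c where "c = (if small (cov i) then cov i else (\<lambda>n. (0, 0)))"
    have sc: "small c" unfolding c_def small_def by simp
    obtain x where x: "0 \<le> x" "x < 1" "x \<notin> cover_set c" "x \<notin> K" using avoid[OF sc cK] by blast
    obtain d where d: "\<psi> d = x" using surj[OF x(1) x(2)] by blast
    have "\<phi> d \<notin> Q.span S"
    proof
      assume a: "\<phi> d \<in> Q.span S"
      have "\<exists>d'. \<phi> d' = \<phi> d" by blast
      then have "\<phi> (SOME d'. \<phi> d' = \<phi> d) = \<phi> d" by (rule someI_ex)
      then have "G (\<phi> d) = \<psi> d" unfolding G_def by (rule samepsi)
      then have "x \<in> K" unfolding K_def using a d by force
      then show False using x(4) by simp
    qed
    moreover have "small (cov i) \<longrightarrow> \<psi> d \<notin> cover_set (cov i)" using x(3) d unfolding c_def by (cases "small (cov i)") auto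
    ultimately show ?thesis unfolding good_def by blast
  qed
  define sel where "sel h i = (SOME d. good i (\<phi> ` h ` {j. (j,i) \<in> R}) d)" for h i
  define D where "D = wfrec R sel"
  have Dgood: "good i (\<phi> ` D ` {j. (j,i) \<in> R}) (D i)" for i
  proof -
    have "D i = sel (cut D R i) i" unfolding D_def by (rule wfrec[OF R(1)])
    moreover have "(cut D R i) ` {j. (j,i) \<in> R} = D ` {j. (j,i) \<in> R}"
      by (rule image_cong) (auto simp: cut_apply)
    ultimately have Di: "D i = (SOME d. good i (\<phi> ` D ` {j. (j,i) \<in> R}) d)" unfolding sel_def by simp
    have "countable (\<phi> ` D ` {j. (j,i) \<in> R})" using R(3) by blast
    then have "\<exists>d. good i (\<phi> ` D ` {j. (j,i) \<in> R}) d" by (rule ex)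
    then show ?thesis unfolding Di by (rule someI_ex)
  qed
  define y where "y i = \<phi> (D i)" for i
  have notin: "\<forall>i. y i \<notin> Q.span (y ` {j. (j,i) \<in> R})"
  proof
    fix i
    have "y ` {j. (j,i) \<in> R} = \<phi> ` D ` {j. (j,i) \<in> R}" unfolding y_def by auto
    then show "y i \<notin> Q.span (y ` {j. (j,i) \<in> R})" using Dgood[of i] unfolding good_def y_def by simp
  qed
  have indep: "\<not> Q.dependent (range y)" by (rule indep_order[OF R(1) R(2) notin])
  have yW: "range y \<subseteq> W" using W(1) unfolding y_def by auto
  obtain B where B: "range y \<subseteq> B" "B \<subseteq> W" "\<not> Q.dependent B" "W \<subseteq> Q.span B"
    by (rule Q.maximal_independent_subset_extend[OF yW indep])
  have "Q.span W \<subseteq> Q.span B" by (rule Q.span_minimal[OF B(4) Q.subspace_span])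
  then have spanB: "Q.span B = UNIV" using W(2) by auto
  have hb: "hamel_basis B" unfolding hamel_basis_def using B(3) spanB by simp
  have lower: "ennreal (1/(8*C)) \<le> (\<Sum>i. ennreal (diameter (U i) powr s))"
    if U: "B \<subseteq> (\<Union>i. U i)" "\<forall>i. bounded (U i)" for U
  proof (rule ccontr)
    assume "\<not> ?thesis"
    then have lt: "(\<Sum>i. ennreal (diameter (U i) powr s)) < ennreal (1/(8*C))" by (simp add: not_le)
    define a where "a i = diameter (U i) powr s" for i
    have a0: "a i \<ge> 0" for i unfolding a_def by simp
    define nz where "nz i \<longleftrightarrow> (\<exists>d. \<phi> d \<in> U i)" for i
    define dd where "dd i = (SOME d. \<phi> d \<in> U i)" for i
    define e where "e i = ((1/2::real)^i / 8)" for i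
    have epos: "e i > 0" for i unfolding e_def by simp
    define lo where "lo i = \<psi> (dd i) - C * a i" for i
    define hi where "hi i = \<psi> (dd i) + C * a i" for i
    have "\<forall>i. \<exists>r. lo i - e i < of_rat r \<and> of_rat r < lo i"
      by (intro allI of_rat_dense) (use epos in simp)
    then obtain p where p: "\<And>i. lo i - e i < of_rat (p i) \<and> of_rat (p i) < lo i"
      by (metis choice)
    have "\<forall>i. \<exists>r. hi i < of_rat r \<and> of_rat r < hi i + e i"
      by (intro allI of_rat_dense) (use epos in simp)
    then obtain q where q: "\<And>i. hi i < of_rat (q i) \<and> of_rat (q i) < hi i + e i"
      by (metis choice)
    define c where "c i = (if nz i then (p i, q i) else (0,0))" for i
    have inI: "\<psi> d \<in> {real_of_rat (fst (c i)) <..< real_of_rat (snd (c i))}" if dU: "\<phi> d \<in> U i" for d i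
    proof -
      have nzi: "nz i" using dU unfolding nz_def by blast
      have ddi: "\<phi> (dd i) \<in> U i" unfolding dd_def using dU by (rule someI[where P="\<lambda>d. \<phi> d \<in> U i"])
      have "dist (\<phi> d) (\<phi> (dd i)) \<le> diameter (U i)"
        by (rule diameter_bounded_bound) (use U(2) dU ddi in auto)
      then have "\<bar>\<phi> d - \<phi> (dd i)\<bar> powr s \<le> a i" unfolding a_def dist_real_def using s
        by (intro powr_mono2) auto
      then have "C * \<bar>\<phi> d - \<phi> (dd i)\<bar> powr s \<le> C * a i" using C by simp
      then have "\<bar>\<psi> d - \<psi> (dd i)\<bar> \<le> C * a i" using hol[of d "dd i"] by linarith
      then show ?thesis using p[of i] q[of i] nzi unfolding c_def lo_def hi_def by auto
    qed
    have trm: "ennreal (real_of_rat (snd (c i)) - real_of_rat (fst (c i)))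
        \<le> ennreal (2*C) * ennreal (a i) + ennreal ((1/2)^i / 4)" for i
    proof (cases "nz i")
      case True
      have "real_of_rat (q i) - real_of_rat (p i) \<le> 2*C*a i + (1/2)^i/4"
        using p[of i] q[of i] unfolding lo_def hi_def e_def by auto
      then have "ennreal (real_of_rat (q i) - real_of_rat (p i)) \<le> ennreal (2*C*a i + (1/2)^i/4)"
        by (rule ennreal_leI)
      also have "\<dots> = ennreal (2*C) * ennreal (a i) + ennreal ((1/2)^i/4)"
        using C a0[of i] by (simp add: ennreal_plus ennreal_mult)
      finally show ?thesis using True unfolding c_def by simp
    next
      case False
      then show ?thesis unfolding c_def by simp
    qed
    have "(\<Sum>i. ennreal (real_of_rat (snd (c i)) - real_of_rat (fst (c i))))
        \<le> (\<Sum>i. ennreal (2*C) * ennreal (a i) + ennreal ((1/2)^i/4))"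
      by (rule suminf_le[OF trm]) auto
    also have "\<dots> = ennreal (2*C) * (\<Sum>i. ennreal (a i)) + ennreal (1/2)"
      by (subst suminf_add[symmetric]) (auto simp: geo_quarter)
    also have "\<dots> \<le> ennreal (2*C) * ennreal (1/(8*C)) + ennreal (1/2)"
      using lt unfolding a_def by (intro add_mono mult_left_mono) auto
    also have "ennreal (2*C) * ennreal (1/(8*C)) + ennreal (1/2) = ennreal (3/4)"
    proof -
      have "ennreal (2*C) * ennreal (1/(8*C)) = ennreal (1/4)"
        using C by (simp add: ennreal_mult[symmetric])
      moreover have "ennreal (1/4) + ennreal (1/2) = ennreal (3/4)"
      proof -
        have "ennreal (1/4) + ennreal (1/2) = ennreal (1/4 + 1/2)" by (rule ennreal_plus[symmetric]) auto
        also have "ennreal (1/4 + 1/2) = ennreal (3/4)" by simp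
        finally show ?thesis .
      qed
      ultimately show ?thesis by (simp only:)
    qed
    also have "\<dots> < 1" by simp
    finally have sm: "small c" unfolding small_def .
    have "good (enc c) (\<phi> ` D ` {j. (j, enc c) \<in> R}) (D (enc c))" by (rule Dgood)
    then have nin: "\<psi> (D (enc c)) \<notin> cover_set c" unfolding good_def cov_enc using sm by simp
    have "y (enc c) \<in> B" using B(1) by auto
    then obtain k where "\<phi> (D (enc c)) \<in> U k" using U(1) unfolding y_def by auto
    then have "\<psi> (D (enc c)) \<in> cover_set c" using inI unfolding cover_set_def by blast
    with nin show False by simp
  qed
  show ?thesis using hb B(2) lower by blast
qed

lemma upper_zero:
  fixes B :: "real set"
  assumes "\<And>\<delta> \<epsilon>. \<delta> > 0 \<Longrightarrow> \<epsilon> > 0 \<Longrightarrow> fcov t \<delta> B \<epsilon>"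
  shows "hausdorff_measure t B = 0"
proof -
  have "hausdorff_pre t \<delta> B = 0" if d: "\<delta> > 0" for \<delta>
  proof -
    have "hausdorff_pre t \<delta> B \<le> 0"
    proof (rule ennreal_le_epsilon)
      fix e :: real assume "0 < e"
      then have "hausdorff_pre t \<delta> B \<le> ennreal e" using d by (intro fcov_pre assms) auto
      then show "hausdorff_pre t \<delta> B \<le> 0 + ennreal e" by simp
    qed
    then show ?thesis by simp
  qed
  then have "(SUP \<delta>\<in>{0<..}. hausdorff_pre t \<delta> B) = (SUP \<delta>\<in>({0<..}::real set). 0)"
    by (intro SUP_cong) auto
  then show ?thesis unfolding hausdorff_measure_def by simp
qed

lemma lower_pos:
  fixes B :: "real set"
  assumes t: "0 < t" "t \<le> s" and c: "c > 0"
    and low: "\<forall>U. B \<subseteq> (\<Union>i. U i) \<and> (\<forall>i. bounded (U i)) \<longrightarrow>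
         ennreal c \<le> (\<Sum>i. ennreal (diameter (U i) powr s))"
  shows "hausdorff_measure t B \<noteq> 0"
proof -
  have "ennreal c \<le> hausdorff_pre t 1 B"
    unfolding hausdorff_pre_def
  proof (rule INF_greatest)
    fix U assume "U \<in> {U :: nat \<Rightarrow> real set. B \<subseteq> (\<Union>i. U i) \<and> (\<forall>i. bounded (U i) \<and> diameter (U i) \<le> 1)}"
    then have U: "B \<subseteq> (\<Union>i. U i)" "\<And>i. bounded (U i)" "\<And>i. diameter (U i) \<le> 1" by auto
    have "ennreal c \<le> (\<Sum>i. ennreal (diameter (U i) powr s))" using low U by blast
    also have "\<dots> \<le> (\<Sum>i. ennreal (diameter (U i) powr t))"
    proof (rule suminf_le)
      fix i
      have "diameter (U i) powr s \<le> diameter (U i) powr t"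
        using U(2,3) t by (intro powr_mono') (auto intro: diameter_ge_0)
      then show "ennreal (diameter (U i) powr s) \<le> ennreal (diameter (U i) powr t)"
        by (rule ennreal_leI)
    qed auto
    finally show "ennreal c \<le> (\<Sum>i. ennreal (diameter (U i) powr t))" .
  qed
  also have "\<dots> \<le> hausdorff_measure t B" unfolding hausdorff_measure_def
    by (rule SUP_upper) simp
  finally have "ennreal c \<le> hausdorff_measure t B" .
  moreover have "ennreal c > 0" using c by simp
  ultimately show ?thesis by auto
qed

theorem theorem3p1:
  assumes "continuum_hypothesis"
  shows "\<forall>s::real. 0 < s \<and> s \<le> 1 \<longrightarrow> (\<exists>B. hamel_basis B \<and> hausdorff_dim B = s)"
proof (intro allI impI)
  fix s :: real assume s: "0 < s \<and> s \<le> 1"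
  then have s0: "s > 0" and s1: "s \<le> 1" by auto
  define b where "b = 2 powr (1/s)"
  have bs: "b powr s = 2" unfolding b_def using s0 by (simp add: powr_powr)
  have "1/s \<ge> 1" using s0 s1 by simp
  then have b2: "b \<ge> 2" unfolding b_def using powr_mono[of 1 "1/s" 2] by simp
  have b1: "b > 1" using b2 by simp
  obtain C where C: "C > 0" "\<And>d d'. \<bar>cs 2 d - cs 2 d'\<bar> \<le> C * \<bar>cs b d - cs b d'\<bar> powr s"
  proof (cases "b = 2")
    case True
    have "(2::real) powr s = 2 powr (1::real)" using bs True by simp
    then have "s = 1" using powr_inj[of 2 s 1] by simp
    then show ?thesis using True by (intro that[of 1]) auto
  next
    case False
    then have "b > 2" using b2 by simp
    then show ?thesis using holder(1)[of b s] s0 bs that by blast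
  qed
  define m where "m = nat \<lceil>b\<rceil> + 1"
  have mb: "real m > b" unfolding m_def by linarith
  have m2: "m \<ge> 2" using mb b2 by linarith
  define W where "W = range (cs b) \<union> range (cs (real m))"
  have "Q.span (range (cs (real m))) \<subseteq> Q.span W" unfolding W_def by (intro Q.span_mono) auto
  then have spanW: "Q.span W = UNIV" using span_cs[OF m2] by auto
  have rW: "range (cs b) \<subseteq> W" unfolding W_def by auto
  have "\<exists>B. hamel_basis B \<and> B \<subseteq> W \<and>
     (\<forall>U. B \<subseteq> (\<Union>i. U i) \<and> (\<forall>i. bounded (U i)) \<longrightarrow>
         ennreal (1/(8*C)) \<le> (\<Sum>i. ennreal (diameter (U i) powr s)))"
    by (rule construct[OF assms C(2) C(1) s0 binary_surj rW spanW])
  then obtain B where B0: "hamel_basis B \<and> B \<subseteq> W \<and>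
     (\<forall>U. B \<subseteq> (\<Union>i. U i) \<and> (\<forall>i. bounded (U i)) \<longrightarrow>
         ennreal (1/(8*C)) \<le> (\<Sum>i. ennreal (diameter (U i) powr s)))" ..
  note B = conjunct1[OF B0] conjunct1[OF conjunct2[OF B0]] conjunct2[OF conjunct2[OF B0]]
  have zero: "hausdorff_measure t B = 0" if ts: "t > s" for t
  proof (rule upper_zero)
    fix \<delta> \<epsilon> :: real assume d: "\<delta> > 0" and e: "\<epsilon> > 0"
    have t0: "t > 0" using ts s0 by simp
    have bst: "b powr s < b powr t" by (rule powr_less_mono[OF ts b1])
    have bt: "b powr t > 2" using bst bs by linarith
    have bmt: "b powr t < real m powr t" by (rule powr_less_mono2[OF t0 _ mb]) (use b1 in simp)
    have mt: "real m powr t > 2" using bmt bt by linarith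
    have m1: "real m > 1" using mb b1 by linarith
    have e2: "\<epsilon>/2 > 0" using e by simp
    have f1: "fcov t \<delta> (range (cs b)) (\<epsilon>/2)" by (rule cantor_null[OF b1 t0 bt d e2])
    have f2: "fcov t \<delta> (range (cs (real m))) (\<epsilon>/2)" by (rule cantor_null[OF m1 t0 mt d e2])
    have f: "fcov t \<delta> W (\<epsilon>/2 + \<epsilon>/2)" unfolding W_def by (rule fcov_Un[OF f1 f2])
    show "fcov t \<delta> B \<epsilon>" by (rule fcov_mono[OF f B(2)]) simp_all
  qed
  have pos: "hausdorff_measure t B \<noteq> 0" if "0 < t" "t \<le> s" for t
    using lower_pos[OF that _ B(3)] C(1) by simp
  have "{t. 0 < t \<and> hausdorff_measure t B = 0} = {s<..}"
  proof (intro set_eqI iffI)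
    fix t assume "t \<in> {t. 0 < t \<and> hausdorff_measure t B = 0}"
    then have t: "0 < t" "hausdorff_measure t B = 0" by auto
    have "\<not> t \<le> s"
    proof
      assume "t \<le> s"
      then have "hausdorff_measure t B \<noteq> 0" by (rule pos[OF t(1)])
      then show False using t(2) by simp
    qed
    then show "t \<in> {s<..}" by simp
  next
    fix t assume "t \<in> {s<..}"
    then have ts: "t > s" by simp
    then have "0 < t" using s0 by simp
    moreover have "hausdorff_measure t B = 0" by (rule zero[OF ts])
    ultimately show "t \<in> {t. 0 < t \<and> hausdorff_measure t B = 0}" by simp
  qed
  then have "hausdorff_dim B = s" unfolding hausdorff_dim_def by simp
  then show "\<exists>B. hamel_basis B \<and> hausdorff_dim B = s" using B(1) by blast
qed

end
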